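(* Under the triangle scaling property, for every $T\ge1$ the generic accelerated Bregman proximal point method satisfies $$d(\lambda^* )-d(\lambda_T)\le\Big[\prod_{k=0}^{T-1}(1-\theta_k)\Big]\big(d(\lambda^* )-d(\lambda_0)+AD_h(\lambda^*,\lambda_0)\big),$$ and $$\frac{1}{\big(1+\sqrt{A/G}\sum_{k=0}^{T-1}\sqrt{\eta_k}\big)^2}\le\prod_{k=0}^{T-1}(1-\theta_k)\le\frac{1}{\big(1+\tfrac12\sqrt{A/G}\sum_{k=0}^{T-1}\sqrt{\eta_k}\big)^2}.$$
   Context: $\Lambda\subseteq\mathbb{R}^m$ closed convex, $d:\Lambda\to\mathbb{R}$ concave with a maximizer $\lambda^*\in\Lambda$. $h$ strictly convex, continuously differentiable on $\Lambda$, $D_h(\lambda,\tilde\lambda)=h(\lambda)-h(\tilde\lambda)-\nabla h(\tilde\lambda)^\top(\lambda-\tilde\lambda)$. Triangle scaling property with constant $G>0$: $D_h((1-\theta)\lambda+\theta\lambda_1,(1-\theta)\lambda+\theta\lambda_2)\le G\theta^2D_h(\lambda_1,\lambda_2)$ for all $\lambda,\lambda_1,\lambda_2\in\Lambda$, $\theta\in[0,1]$. Generic accelerated BPP (acc-BPP): given $\lambda_0\in\Lambda$, $v_0=\lambda_0$, $A_0=A>0$, $\eta_k>0$, set $\phi_0(\lambda)=d(\lambda_0)-AD_h(\lambda,\lambda_0)$, and for $k\ge0$: $\theta_k\in(0,1)$ is the positive root of $\theta^2=\eta_kA_k(1-\theta)/G$, i.e. $\theta_k=\frac{\sqrt{(A_k\eta_k/G)^2+4A_k\eta_k/G}-A_k\eta_k/G}{2}$;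 $y_k=\theta_kv_k+(1-\theta_k)\lambda_k$; $\lambda_{k+1}\in\arg\max_{\lambda\in\Lambda}\{d(\lambda)-\frac1{\eta_k}D_h(\lambda,y_k)\}$; $A_{k+1}=(1-\theta_k)A_k$; $\phi_{k+1}(\lambda)=(1-\theta_k)\phi_k(\lambda)+\theta_k\big(d(\lambda_{k+1})+\frac1{\eta_k}(\nabla h(\lambda_{k+1})-\nabla h(y_k))^\top(\lambda-\lambda_{k+1})\big)$; $v_{k+1}\in\arg\max_{\lambda\in\Lambda}\phi_{k+1}(\lambda)$. All maximizers are assumed to exist. *)

theory Defs
  imports "HOL-Analysis.Analysis"
begin

definition strictly_convex_on :: "'a::real_vector set \<Rightarrow> ('a \<Rightarrow> real) \<Rightarrow> bool" where
  "strictly_convex_on S f \<longleftrightarrow>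
     (\<forall>x\<in>S. \<forall>y\<in>S. \<forall>t::real. x \<noteq> y \<and> 0 < t \<and> t < 1 \<longrightarrow>
        f ((1 - t) *\<^sub>R x + t *\<^sub>R y) < (1 - t) * f x + t * f y)"

definition bregman :: "('a::real_inner \<Rightarrow> real) \<Rightarrow> ('a \<Rightarrow> 'a) \<Rightarrow> 'a \<Rightarrow> 'a \<Rightarrow> real" where
  "bregman h gh l lt = h l - h lt - gh lt \<bullet> (l - lt)"

primrec acc_phi ::
  "('a::real_inner \<Rightarrow> real) \<Rightarrow> ('a \<Rightarrow> real) \<Rightarrow> ('a \<Rightarrow> 'a) \<Rightarrow> real \<Rightarrow>
   (nat \<Rightarrow> 'a) \<Rightarrow> (nat \<Rightarrow> 'a) \<Rightarrow> (nat \<Rightarrow> real) \<Rightarrow> (nat \<Rightarrow> real) \<Rightarrow> nat \<Rightarrow> 'a \<Rightarrow> real" where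
  "acc_phi d h gh A lam y eta theta 0 = (\<lambda>l. d (lam 0) - A * bregman h gh l (lam 0))"
| "acc_phi d h gh A lam y eta theta (Suc k) = (\<lambda>l.
      (1 - theta k) * acc_phi d h gh A lam y eta theta k l
      + theta k * (d (lam (Suc k))
          + (1 / eta k) * ((gh (lam (Suc k)) - gh (y k)) \<bullet> (l - lam (Suc k)))))"

end

theory Submission
  imports Defs
begin


definition cc :: "'a::real_vector set \<Rightarrow> ('a \<Rightarrow> real) \<Rightarrow> bool" where
  "cc S f \<longleftrightarrow> (\<forall>x\<in>S. \<forall>z\<in>S. \<forall>t::real. 0 \<le> t \<and> t \<le> 1 \<longrightarrow>
      (1 - t) * f x + t * f z \<le> f ((1 - t) *\<^sub>R x + t *\<^sub>R z))"

lemma lim_core: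
  fixes h :: "'a::real_inner \<Rightarrow> real"
  assumes conv: "convex S" and x: "x \<in> S" and l: "l \<in> S"
    and der: "\<And>z. z \<in> S \<Longrightarrow> (h has_derivative (\<lambda>u. gh z \<bullet> u)) (at z within S)"
    and bnd: "\<And>t. 0 < t \<Longrightarrow> t \<le> 1 \<Longrightarrow> c * t \<le> h (x + t *\<^sub>R (l - x)) - h x"
  shows "c \<le> gh x \<bullet> (l - x)"
proof -
  let ?p = "\<lambda>t::real. x + t *\<^sub>R (l - x)"
  have pd: "(?p has_derivative (\<lambda>s. s *\<^sub>R (l - x))) (at 0 within {0..1})"
    by (auto intro!: derivative_eq_intros)
  have img: "?p ` {0..1} \<subseteq> S"
  proof
    fix z assume "z \<in> ?p ` {0..1}"
    then obtain t where t: "0 \<le> t" "t \<le> 1" "z = ?p t" by auto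
    have "z = (1 - t) *\<^sub>R x + t *\<^sub>R l" using t by (simp add: algebra_simps)
    then show "z \<in> S" using conv x l t by (simp add: convex_alt)
  qed
  have "((\<lambda>t. h (?p t)) has_derivative (\<lambda>s. gh (?p 0) \<bullet> (s *\<^sub>R (l - x)))) (at 0 within {0..1})"
    by (rule has_derivative_in_compose2[OF der img _ pd]) auto
  then have "((\<lambda>t. h (?p t)) has_derivative (\<lambda>s. (gh x \<bullet> (l - x)) * s)) (at 0 within {0..1})"
    by (simp add: mult.commute)
  then have "((\<lambda>t. h (?p t)) has_field_derivative (gh x \<bullet> (l - x))) (at 0 within {0..1})"
    by (simp add: has_field_derivative_def)
  then have lim: "((\<lambda>t. (h (?p t) - h (?p 0)) / (t - 0)) \<longlongrightarrow> gh x \<bullet> (l - x)) (at_right 0)"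
    by (simp add: has_field_derivative_iff at_within_Icc_at_right)
  have ev0: "\<forall>t. 0 < t \<and> t < 1 \<longrightarrow> c \<le> (h (?p t) - h (?p 0)) / (t - 0)"
    using bnd by (auto simp: pos_le_divide_eq)
  have ev: "eventually (\<lambda>t. c \<le> (h (?p t) - h (?p 0)) / (t - 0)) (at_right (0::real))"
    unfolding eventually_at_right_field using ev0 by (intro exI[of _ 1]) auto
  show ?thesis by (rule tendsto_lowerbound[OF lim ev]) simp
qed

lemma lim_core_up:
  fixes h :: "'a::real_inner \<Rightarrow> real"
  assumes conv: "convex S" and x: "x \<in> S" and l: "l \<in> S"
    and der: "\<And>z. z \<in> S \<Longrightarrow> (h has_derivative (\<lambda>u. gh z \<bullet> u)) (at z within S)"
    and bnd: "\<And>t. 0 < t \<Longrightarrow> t \<le> 1 \<Longrightarrow> h (x + t *\<^sub>R (l - x)) - h x \<le> c * t"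
  shows "gh x \<bullet> (l - x) \<le> c"
proof -
  let ?p = "\<lambda>t::real. x + t *\<^sub>R (l - x)"
  have pd: "(?p has_derivative (\<lambda>s. s *\<^sub>R (l - x))) (at 0 within {0..1})"
    by (auto intro!: derivative_eq_intros)
  have img: "?p ` {0..1} \<subseteq> S"
  proof
    fix z assume "z \<in> ?p ` {0..1}"
    then obtain t where t: "0 \<le> t" "t \<le> 1" "z = ?p t" by auto
    have "z = (1 - t) *\<^sub>R x + t *\<^sub>R l" using t by (simp add: algebra_simps)
    then show "z \<in> S" using conv x l t by (simp add: convex_alt)
  qed
  have "((\<lambda>t. h (?p t)) has_derivative (\<lambda>s. gh (?p 0) \<bullet> (s *\<^sub>R (l - x)))) (at 0 within {0..1})"
    by (rule has_derivative_in_compose2[OF der img _ pd]) auto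
  then have "((\<lambda>t. h (?p t)) has_derivative (\<lambda>s. (gh x \<bullet> (l - x)) * s)) (at 0 within {0..1})"
    by (simp add: mult.commute)
  then have "((\<lambda>t. h (?p t)) has_field_derivative (gh x \<bullet> (l - x))) (at 0 within {0..1})"
    by (simp add: has_field_derivative_def)
  then have lim: "((\<lambda>t. (h (?p t) - h (?p 0)) / (t - 0)) \<longlongrightarrow> gh x \<bullet> (l - x)) (at_right 0)"
    by (simp add: has_field_derivative_iff at_within_Icc_at_right)
  have ev0: "\<forall>t. 0 < t \<and> t < 1 \<longrightarrow> (h (?p t) - h (?p 0)) / (t - 0) \<le> c"
    using bnd by (auto simp: pos_divide_le_eq)
  have ev: "eventually (\<lambda>t. (h (?p t) - h (?p 0)) / (t - 0) \<le> c) (at_right (0::real))"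
    unfolding eventually_at_right_field using ev0 by (intro exI[of _ 1]) auto
  show ?thesis by (rule tendsto_upperbound[OF lim ev]) simp
qed

lemma first_order:
  fixes h :: "'a::real_inner \<Rightarrow> real"
  assumes conv: "convex S" and x: "x \<in> S"
    and der: "\<And>z. z \<in> S \<Longrightarrow> (h has_derivative (\<lambda>u. gh z \<bullet> u)) (at z within S)"
    and f: "cc S f" and a: "a > 0"
    and mx: "\<And>l. l \<in> S \<Longrightarrow> f l - a * h l \<le> f x - a * h x"
    and l: "l \<in> S"
  shows "f l - f x \<le> a * (gh x \<bullet> (l - x))"
proof -
  have "(f l - f x) / a \<le> gh x \<bullet> (l - x)"
  proof (rule lim_core[OF conv x l der])
    fix t :: real assume t: "0 < t" "t \<le> 1"
    have eq: "x + t *\<^sub>R (l - x) = (1 - t) *\<^sub>R x + t *\<^sub>R l" by (simp add: algebra_simps)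
    have in1: "(1 - t) *\<^sub>R x + t *\<^sub>R l \<in> S" using conv x l t by (simp add: convex_alt)
    have c1: "(1 - t) * f x + t * f l \<le> f ((1 - t) *\<^sub>R x + t *\<^sub>R l)"
      using f x l t unfolding cc_def by auto
    have c2: "f ((1 - t) *\<^sub>R x + t *\<^sub>R l) - a * h ((1 - t) *\<^sub>R x + t *\<^sub>R l) \<le> f x - a * h x"
      using mx[OF in1] .
    have "t * (f l - f x) \<le> a * (h ((1 - t) *\<^sub>R x + t *\<^sub>R l) - h x)"
      using c1 c2 by (simp add: algebra_simps)
    then show "(f l - f x) / a * t \<le> h (x + t *\<^sub>R (l - x)) - h x"
      using a unfolding eq by (simp add: divide_simps mult.commute)
  qed (simp_all add: der)
  then show ?thesis using a by (simp add: divide_simps mult.commute)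
qed

lemma breg_nonneg:
  fixes h :: "'a::real_inner \<Rightarrow> real"
  assumes conv: "convex S" and x: "x \<in> S" and l: "l \<in> S"
    and der: "\<And>z. z \<in> S \<Longrightarrow> (h has_derivative (\<lambda>u. gh z \<bullet> u)) (at z within S)"
    and sc: "strictly_convex_on S h"
  shows "bregman h gh l x \<ge> 0"
proof -
  have "gh x \<bullet> (l - x) \<le> h l - h x"
  proof (rule lim_core_up[OF conv x l der])
    fix t :: real assume t: "0 < t" "t \<le> 1"
    have eq: "x + t *\<^sub>R (l - x) = (1 - t) *\<^sub>R x + t *\<^sub>R l" by (simp add: algebra_simps)
    have "h ((1 - t) *\<^sub>R x + t *\<^sub>R l) \<le> (1 - t) * h x + t * h l"
    proof (cases "x = l \<or> t = 1")
      case True then show ?thesis by (auto simp: algebra_simps)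
    next
      case False
      then show ?thesis using sc x l t unfolding strictly_convex_on_def
        by (meson less_eq_real_def)
    qed
    then show "h (x + t *\<^sub>R (l - x)) - h x \<le> (h l - h x) * t" 
      unfolding eq by (simp add: algebra_simps)
  qed simp_all
  then show ?thesis unfolding bregman_def by simp
qed
lemma cc_comb:
  assumes "cc S f" "cc S g" "a \<ge> 0" "b \<ge> 0"
  shows "cc S (\<lambda>l. a * f l + b * g l)"
  unfolding cc_def
proof (intro ballI allI impI)
  fix x z and t :: real assume x: "x \<in> S" and z: "z \<in> S" and t: "0 \<le> t \<and> t \<le> 1"
  have 1: "(1 - t) * f x + t * f z \<le> f ((1 - t) *\<^sub>R x + t *\<^sub>R z)"
    using assms(1) x z t unfolding cc_def by blast
  have 2: "(1 - t) * g x + t * g z \<le> g ((1 - t) *\<^sub>R x + t *\<^sub>R z)"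
    using assms(2) x z t unfolding cc_def by blast
  have "a * ((1 - t) * f x + t * f z) + b * ((1 - t) * g x + t * g z)
        \<le> a * f ((1 - t) *\<^sub>R x + t *\<^sub>R z) + b * g ((1 - t) *\<^sub>R x + t *\<^sub>R z)"
    using 1 2 assms(3,4) by (intro add_mono mult_left_mono)
  then show "(1 - t) * (a * f x + b * g x) + t * (a * f z + b * g z)
        \<le> a * f ((1 - t) *\<^sub>R x + t *\<^sub>R z) + b * g ((1 - t) *\<^sub>R x + t *\<^sub>R z)"
    by (simp add: algebra_simps)
qed

lemma cc_affine: "cc S (\<lambda>l. c + w \<bullet> l)"
  unfolding cc_def by (simp add: inner_add_right algebra_simps)

lemma cc_add_affine:
  assumes "cc S f" shows "cc S (\<lambda>l. f l + (c + w \<bullet> l))"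
  using cc_comb[OF assms cc_affine[of S c w], of 1 1] by simp

lemma cc_concave: "concave_on S f \<Longrightarrow> cc S f"
  unfolding cc_def using concave_onD by blast

lemma step_rate:
  fixes x z q :: real
  assumes "0 < z" "z \<le> x" "q \<ge> 0" "x\<^sup>2 - z\<^sup>2 = q * z * x\<^sup>2"
  shows "q / 2 \<le> 1 / z - 1 / x \<and> 1 / z - 1 / x \<le> q"
proof -
  have x: "x > 0" using assms by simp
  have "1 / z - 1 / x - q * x / (x + z) = ((x\<^sup>2 - z\<^sup>2) - q * z * x\<^sup>2) / (x * z * (x + z))"
    using x assms(1) by (simp add: field_simps power2_eq_square)
  also have "\<dots> = 0" using assms(4) by simp
  finally have eq: "1 / z - 1 / x = q * x / (x + z)" by simp
  have "q / 2 \<le> q * x / (x + z)" using assms x by (simp add: field_simps mult_left_mono)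
  moreover have "q * x / (x + z) \<le> q" using assms x by (simp add: field_simps mult_left_mono)
  ultimately show ?thesis unfolding eq by simp
qed

lemma theta_facts:
  fixes p th :: real
  assumes p: "p > 0" and th: "th = (sqrt (p\<^sup>2 + 4 * p) - p) / 2"
  shows "0 < th \<and> th < 1 \<and> th\<^sup>2 = p * (1 - th)"
proof -
  define s where "s = sqrt (p\<^sup>2 + 4 * p)"
  have s2: "s\<^sup>2 = p\<^sup>2 + 4 * p" unfolding s_def using p by simp
  have "p = sqrt (p\<^sup>2)" using p by simp
  also have "\<dots> < s" unfolding s_def using p by (intro real_sqrt_less_mono) simp
  finally have ps: "p < s" .
  have "s < sqrt ((p + 2)\<^sup>2)" unfolding s_def by (intro real_sqrt_less_mono) (simp add: power2_eq_square algebra_simps)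
  also have "\<dots> = p + 2" using p by simp
  finally have sp: "s < p + 2" .
  have "th\<^sup>2 = (s\<^sup>2 - 2 * p * s + p\<^sup>2) / 4" unfolding th s_def[symmetric]
    by (simp add: power2_eq_square algebra_simps)
  also have "\<dots> = p * (1 - th)" unfolding s2 th s_def[symmetric] by (simp add: field_simps power2_eq_square)
  finally show ?thesis using ps sp unfolding th s_def[symmetric] by simp
qed

lemma phi_aux: "(1 - t) * P + t * (dL + (1/e) * (g \<bullet> (l - L))) + (1 - t) * a * H
   = (1 - t) * (P + a * H) + t * ((dL - (1/e) * (g \<bullet> L)) + ((1/e) *\<^sub>R g) \<bullet> l)"
  for g l L :: "'a::real_inner"
  by (simp add: inner_diff_right algebra_simps)

lemma lin_comb: "(1 - t) * (g \<bullet> (a - c)) + t * (g \<bullet> (b - c)) = g \<bullet> (((1 - t) *\<^sub>R a + t *\<^sub>R b) - c)"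
  by (simp add: inner_diff_right inner_add_right algebra_simps)

locale accbpp =
  fixes \<Lambda> :: "(real ^ 'm) set"
    and d h :: "real ^ 'm \<Rightarrow> real"
    and gh :: "real ^ 'm \<Rightarrow> real ^ 'm"
    and lamstar :: "real ^ 'm"
    and G A :: real
    and lam v y :: "nat \<Rightarrow> real ^ 'm"
    and Aseq eta theta :: "nat \<Rightarrow> real"
    and T :: nat
  assumes closed: "closed \<Lambda>" and convex: "convex \<Lambda>"
    and d_concave: "concave_on \<Lambda> d"
    and lamstar_in: "lamstar \<in> \<Lambda>"
    and lamstar_max: "\<forall>l\<in>\<Lambda>. d l \<le> d lamstar"
    and h_strict: "strictly_convex_on \<Lambda> h"
    and h_deriv: "\<forall>x\<in>\<Lambda>. (h has_derivative (\<lambda>u. gh x \<bullet> u)) (at x within \<Lambda>)"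
    and gh_cont: "continuous_on \<Lambda> gh"
    and G_pos: "G > 0"
    and TSP: "\<forall>l\<in>\<Lambda>. \<forall>l1\<in>\<Lambda>. \<forall>l2\<in>\<Lambda>. \<forall>t::real. 0 \<le> t \<and> t \<le> 1 \<longrightarrow>
        bregman h gh ((1 - t) *\<^sub>R l + t *\<^sub>R l1) ((1 - t) *\<^sub>R l + t *\<^sub>R l2)
          \<le> G * t\<^sup>2 * bregman h gh l1 l2"
    and lam0_in: "lam 0 \<in> \<Lambda>"
    and v0: "v 0 = lam 0"
    and A_pos: "A > 0"
    and A0: "Aseq 0 = A"
    and eta_pos: "\<forall>k. eta k > 0"
    and theta_def: "\<forall>k. theta k =
        (sqrt ((Aseq k * eta k / G)\<^sup>2 + 4 * Aseq k * eta k / G) - Aseq k * eta k / G) / 2"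
    and y_def: "\<forall>k. y k = theta k *\<^sub>R v k + (1 - theta k) *\<^sub>R lam k"
    and lam_step: "\<forall>k. lam (Suc k) \<in> \<Lambda> \<and>
        (\<forall>l\<in>\<Lambda>. d l - (1 / eta k) * bregman h gh l (y k)
           \<le> d (lam (Suc k)) - (1 / eta k) * bregman h gh (lam (Suc k)) (y k))"
    and Aseq_step: "\<forall>k. Aseq (Suc k) = (1 - theta k) * Aseq k"
    and v_step: "\<forall>k. v (Suc k) \<in> \<Lambda> \<and>
        (\<forall>l\<in>\<Lambda>. acc_phi d h gh A lam y eta theta (Suc k) l
           \<le> acc_phi d h gh A lam y eta theta (Suc k) (v (Suc k)))"
    and T_ge: "T \<ge> 1"
begin

abbreviation "phi \<equiv> acc_phi d h gh A lam y eta theta"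

lemma der: "z \<in> \<Lambda> \<Longrightarrow> (h has_derivative (\<lambda>u. gh z \<bullet> u)) (at z within \<Lambda>)"
  using h_deriv by blast

lemma Dnn: "x \<in> \<Lambda> \<Longrightarrow> l \<in> \<Lambda> \<Longrightarrow> bregman h gh l x \<ge> 0"
  by (rule breg_nonneg[OF convex _ _ der h_strict])

lemma lam_in: "lam k \<in> \<Lambda>"
  using lam0_in lam_step by (cases k) auto

lemma v_in: "v k \<in> \<Lambda>"
  using lam0_in v0 v_step by (cases k) auto

lemma Aseq_theta: "Aseq k > 0 \<and> 0 < theta k \<and> theta k < 1 \<and>
    (theta k)\<^sup>2 = (Aseq k * eta k / G) * (1 - theta k)"
proof (induction k)
  case 0
  have p: "Aseq 0 * eta 0 / G > 0" using A0 A_pos eta_pos G_pos by simp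
  have "theta 0 = (sqrt ((Aseq 0 * eta 0 / G)\<^sup>2 + 4 * (Aseq 0 * eta 0 / G)) - Aseq 0 * eta 0 / G) / 2"
    using theta_def by simp
  from theta_facts[OF p this] show ?case using A0 A_pos by simp
next
  case (Suc k)
  have a: "Aseq (Suc k) > 0" using Suc Aseq_step by simp
  have p: "Aseq (Suc k) * eta (Suc k) / G > 0" using a eta_pos G_pos by simp
  have "theta (Suc k) = (sqrt ((Aseq (Suc k) * eta (Suc k) / G)\<^sup>2 + 4 * (Aseq (Suc k) * eta (Suc k) / G)) - Aseq (Suc k) * eta (Suc k) / G) / 2"
    using theta_def by simp
  from theta_facts[OF p this] show ?case using a by simp
qed

lemma y_in: "y k \<in> \<Lambda>"
proof -
  have "y k = (1 - theta k) *\<^sub>R lam k + theta k *\<^sub>R v k" using y_def by (simp add: add.commute)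
  then show ?thesis using convex lam_in v_in Aseq_theta[of k] by (simp add: convex_alt)
qed

lemma L_ge:
  assumes l: "l \<in> \<Lambda>"
  shows "d l \<le> d (lam (Suc k)) + (1 / eta k) * ((gh (lam (Suc k)) - gh (y k)) \<bullet> (l - lam (Suc k)))"
proof -
  define a where "a = 1 / eta k"
  have a: "a > 0" using eta_pos a_def by simp
  define f where "f = (\<lambda>l. d l + a * (h (y k) - gh (y k) \<bullet> y k) + (a *\<^sub>R gh (y k)) \<bullet> l)"
  have ccf: "cc \<Lambda> f" unfolding f_def
    using cc_add_affine[OF cc_concave[OF d_concave], of "a * (h (y k) - gh (y k) \<bullet> y k)" "a *\<^sub>R gh (y k)"]
    by (simp add: add.assoc)
  have fe: "\<And>l. f l - a * h l = d l - (1 / eta k) * bregman h gh l (y k)"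
    unfolding f_def a_def bregman_def by (simp add: inner_diff_right algebra_simps)
  have "f l - f (lam (Suc k)) \<le> a * (gh (lam (Suc k)) \<bullet> (l - lam (Suc k)))"
    by (rule first_order[OF convex lam_in der ccf a _ l]) (use lam_step fe in auto)
  then show ?thesis unfolding f_def a_def by (simp add: inner_diff_right algebra_simps)
qed

lemma phi_Suc: "phi (Suc k) l = (1 - theta k) * phi k l + theta k * (d (lam (Suc k))
          + (1 / eta k) * ((gh (lam (Suc k)) - gh (y k)) \<bullet> (l - lam (Suc k))))"
  by simp

lemma phi_cc: "cc \<Lambda> (\<lambda>l. phi k l + Aseq k * h l)"
proof (induction k)
  case 0
  have EQ0: "(\<lambda>l. phi 0 l + Aseq 0 * h l) = (\<lambda>l. (d (lam 0) + A * h (lam 0) - A * (gh (lam 0) \<bullet> lam 0)) + (A *\<^sub>R gh (lam 0)) \<bullet> l)"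
    by (rule ext) (simp add: A0 bregman_def inner_diff_right algebra_simps)
  show ?case unfolding EQ0 by (rule cc_affine)
next
  case (Suc k)
  let ?g = "gh (lam (Suc k)) - gh (y k)"
  have AS: "Aseq (Suc k) = (1 - theta k) * Aseq k" using Aseq_step by simp
  have EQ: "(\<lambda>l. phi (Suc k) l + Aseq (Suc k) * h l) = (\<lambda>l. (1 - theta k) * (phi k l + Aseq k * h l)
     + theta k * ((d (lam (Suc k)) - (1 / eta k) * (?g \<bullet> lam (Suc k))) + ((1 / eta k) *\<^sub>R ?g) \<bullet> l))"
    unfolding AS by (rule ext) (simp only: phi_Suc phi_aux)
  show ?case unfolding EQ
    by (rule cc_comb[OF Suc cc_affine]) (use Aseq_theta[of k] in auto)
qed

lemma v_max: "l \<in> \<Lambda> \<Longrightarrow> phi k l \<le> phi k (v k)"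
proof (cases k)
  case 0
  assume l: "l \<in> \<Lambda>"
  show ?thesis using 0 v0 Dnn[OF lam0_in l] A_pos by (simp add: bregman_def)
next
  case (Suc j)
  assume "l \<in> \<Lambda>" then show ?thesis using v_step Suc by blast
qed

lemma phi_upper: "l \<in> \<Lambda> \<Longrightarrow> phi k l \<le> phi k (v k) - Aseq k * bregman h gh l (v k)"
proof -
  assume l: "l \<in> \<Lambda>"
  have a: "Aseq k > 0" using Aseq_theta by blast
  have "(phi k l + Aseq k * h l) - (phi k (v k) + Aseq k * h (v k)) \<le> Aseq k * (gh (v k) \<bullet> (l - v k))"
    by (rule first_order[OF convex v_in der phi_cc a _ l]) (use v_max in auto)
  then show ?thesis by (simp add: bregman_def algebra_simps)
qed

lemma phi_lower: "l \<in> \<Lambda> \<Longrightarrow> (1 - Aseq k / A) * d l + (Aseq k / A) * phi 0 l \<le> phi k l"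
proof (induction k)
  case 0 then show ?case using A0 A_pos by simp
next
  case (Suc k)
  have th: "0 < theta k" "theta k < 1" using Aseq_theta by auto
  have AS: "Aseq (Suc k) = (1 - theta k) * Aseq k" using Aseq_step by simp
  have "(1 - theta k) * ((1 - Aseq k / A) * d l + (Aseq k / A) * phi 0 l) + theta k * d l
     \<le> (1 - theta k) * phi k l + theta k * (d (lam (Suc k))
          + (1 / eta k) * ((gh (lam (Suc k)) - gh (y k)) \<bullet> (l - lam (Suc k))))"
    using Suc th L_ge[OF Suc.prems, of k] by (intro add_mono mult_left_mono) auto
  moreover have eq: "\<And>X. (1 - Aseq (Suc k) / A) * d l + (Aseq (Suc k) / A) * X
     = (1 - theta k) * ((1 - Aseq k / A) * d l + (Aseq k / A) * X) + theta k * d l"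
    using A_pos unfolding AS by (simp add: field_simps)
  ultimately show ?case using phi_Suc[of k l] eq[of "phi 0 l"] by linarith
qed

lemma three_point: "(gh a - gh b) \<bullet> (c - a) = bregman h gh c b - bregman h gh a b - bregman h gh c a"
  by (simp add: bregman_def inner_diff_right inner_diff_left algebra_simps)

lemma d_ge: "phi k (v k) \<le> d (lam k)"
proof (induction k)
  case 0 then show ?case using v0 by (simp add: bregman_def)
next
  case (Suc k)
  let ?t = "theta k" and ?e = "eta k" and ?L = "lam (Suc k)" and ?g = "gh (lam (Suc k)) - gh (y k)"
  have th: "0 < ?t" "?t < 1" "?t\<^sup>2 = (Aseq k * eta k / G) * (1 - ?t)" "Aseq k > 0"
    using Aseq_theta by auto
  have e: "?e > 0" using eta_pos by simp
  have "phi (Suc k) l \<le> d ?L" if l: "l \<in> \<Lambda>" for l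
  proof -
    define z where "z = (1 - ?t) *\<^sub>R lam k + ?t *\<^sub>R l"
    have z: "z \<in> \<Lambda>" unfolding z_def using convex lam_in l th by (simp add: convex_alt)
    have yk: "y k = (1 - ?t) *\<^sub>R lam k + ?t *\<^sub>R v k" using y_def by (simp add: add.commute)
    have LC: "(1 - ?t) * (?g \<bullet> (lam k - ?L)) + ?t * (?g \<bullet> (l - ?L)) = ?g \<bullet> (z - ?L)"
      unfolding z_def by (rule lin_comb)
    have p1: "phi k l \<le> d (lam k) - Aseq k * bregman h gh l (v k)"
      using phi_upper[OF l, of k] Suc by simp
    have p2: "d (lam k) \<le> d ?L + (1 / ?e) * (?g \<bullet> (lam k - ?L))" by (rule L_ge[OF lam_in])
    have "phi (Suc k) l \<le> (1 - ?t) * (d ?L + (1 / ?e) * (?g \<bullet> (lam k - ?L)) - Aseq k * bregman h gh l (v k))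
        + ?t * (d ?L + (1 / ?e) * (?g \<bullet> (l - ?L)))"
      unfolding phi_Suc using p1 p2 th e by (intro add_mono mult_left_mono) auto
    also have "\<dots> = d ?L + (1 / ?e) * (?g \<bullet> (z - ?L)) - (1 - ?t) * Aseq k * bregman h gh l (v k)"
      unfolding LC[symmetric] using e by (simp add: field_simps)
    also have "?g \<bullet> (z - ?L) \<le> bregman h gh z (y k)"
      using three_point[of ?L "y k" z] Dnn[OF y_in[of k] lam_in[of "Suc k"]] Dnn[OF lam_in[of "Suc k"] z] by linarith
    also have "bregman h gh z (y k) \<le> G * ?t\<^sup>2 * bregman h gh l (v k)"
      using TSP lam_in l v_in th unfolding z_def yk by (meson less_eq_real_def)
    also have "G * ?t\<^sup>2 = ?e * ((1 - ?t) * Aseq k)" using th(3) G_pos by (simp add: field_simps)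
    finally show ?thesis using e by (simp add: field_simps)
  qed
  then show ?case using v_in by blast
qed

lemma prod_eq: "(\<Prod>k<T. 1 - theta k) = Aseq T / A"
  by (induction T) (use A0 A_pos Aseq_step in auto)

lemma rate_step: "(1/2) * sqrt (A / G) * sqrt (eta k) \<le> sqrt (A / Aseq (Suc k)) - sqrt (A / Aseq k)
   \<and> sqrt (A / Aseq (Suc k)) - sqrt (A / Aseq k) \<le> sqrt (A / G) * sqrt (eta k)"
proof -
  have th: "0 < theta k" "theta k < 1" "(theta k)\<^sup>2 = (Aseq k * eta k / G) * (1 - theta k)" "Aseq k > 0"
    using Aseq_theta by auto
  have AS: "Aseq (Suc k) = (1 - theta k) * Aseq k" using Aseq_step by simp
  have a1: "Aseq (Suc k) > 0" using Aseq_theta by blast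
  define x where "x = sqrt (Aseq k)"
  define z where "z = sqrt (Aseq (Suc k))"
  define q where "q = sqrt (eta k / G)"
  have x2: "x\<^sup>2 = Aseq k" unfolding x_def using th by simp
  have z2: "z\<^sup>2 = Aseq (Suc k)" unfolding z_def using a1 by simp
  have zpos: "z > 0" unfolding z_def using a1 by simp
  have zx: "z \<le> x" unfolding z_def x_def using AS th by (intro real_sqrt_le_mono) (simp add: mult_left_le_one_le)
  have q0: "q \<ge> 0" unfolding q_def using eta_pos[rule_format, of k] G_pos by simp
  have "(theta k)\<^sup>2 = (eta k / G) * z\<^sup>2" using th(3) unfolding z2 AS by (simp add: field_simps)
  then have "theta k = sqrt ((eta k / G) * z\<^sup>2)" using th by (metis less_eq_real_def real_sqrt_unique)
  also have "\<dots> = sqrt (eta k / G) * sqrt (z\<^sup>2)" by (rule real_sqrt_mult)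
  also have "\<dots> = q * z" unfolding q_def using zpos by simp
  finally have tq: "theta k = q * z" .
  have "x\<^sup>2 - z\<^sup>2 = q * z * x\<^sup>2" unfolding x2 z2 AS tq[symmetric] by (simp add: algebra_simps)
  from step_rate[OF zpos zx q0 this]
  have sr: "q / 2 \<le> 1 / z - 1 / x" "1 / z - 1 / x \<le> q" by auto
  have e1: "sqrt (A / Aseq (Suc k)) - sqrt (A / Aseq k) = sqrt A * (1 / z - 1 / x)"
    unfolding x_def z_def by (simp add: real_sqrt_divide algebra_simps)
  have e2: "sqrt A * q = sqrt (A / G) * sqrt (eta k)"
    unfolding q_def by (simp add: real_sqrt_divide real_sqrt_mult)
  have sA: "sqrt A \<ge> 0" using A_pos by simp
  show ?thesis unfolding e1 using mult_left_mono[OF sr(1) sA] mult_left_mono[OF sr(2) sA] e2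
    by (simp add: algebra_simps)
qed

lemma rate_sum: "1 + (1/2) * sqrt (A / G) * (\<Sum>k<n. sqrt (eta k)) \<le> sqrt (A / Aseq n)
   \<and> sqrt (A / Aseq n) \<le> 1 + sqrt (A / G) * (\<Sum>k<n. sqrt (eta k))"
proof (induction n)
  case 0 then show ?case using A0 A_pos by simp
next
  case (Suc n)
  then show ?case using rate_step[of n] by (simp add: algebra_simps)
qed

lemma main: 
  shows "d lamstar - d (lam T)
           \<le> (\<Prod>k<T. 1 - theta k) * (d lamstar - d (lam 0) + A * bregman h gh lamstar (lam 0))
         \<and> 1 / (1 + sqrt (A / G) * (\<Sum>k<T. sqrt (eta k)))\<^sup>2 \<le> (\<Prod>k<T. 1 - theta k)
         \<and> (\<Prod>k<T. 1 - theta k) \<le> 1 / (1 + (1/2) * sqrt (A / G) * (\<Sum>k<T. sqrt (eta k)))\<^sup>2"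
proof -
  define P where "P = Aseq T / A"
  have Pe: "(\<Prod>k<T. 1 - theta k) = P" unfolding P_def by (rule prod_eq)
  have "(1 - P) * d lamstar + P * phi 0 lamstar \<le> d (lam T)"
    using phi_lower[OF lamstar_in, of T] v_max[OF lamstar_in, of T] d_ge[of T] unfolding P_def by linarith
  then have part1: "d lamstar - d (lam T) \<le> P * (d lamstar - d (lam 0) + A * bregman h gh lamstar (lam 0))"
    by (simp add: algebra_simps)
  define r where "r = sqrt (A / Aseq T)"
  define S where "S = (\<Sum>k<T. sqrt (eta k))"
  have rb: "1 + (1/2) * sqrt (A / G) * S \<le> r" "r \<le> 1 + sqrt (A / G) * S"
    using rate_sum[of T] unfolding r_def S_def by auto
  have S0: "S \<ge> 0" unfolding S_def using eta_pos by (intro sum_nonneg) (simp add: less_imp_le)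
  have c0: "sqrt (A / G) \<ge> 0" using A_pos G_pos by simp
  have lo: "1 \<le> 1 + (1/2) * sqrt (A / G) * S" using S0 c0 by simp
  have aT: "Aseq T > 0" using Aseq_theta by blast
  have Pr: "P = 1 / r\<^sup>2" unfolding P_def r_def using aT A_pos by simp
  have rpos: "r > 0" using rb lo by simp
  have b1: "1 / (1 + sqrt (A / G) * S)\<^sup>2 \<le> 1 / r\<^sup>2"
    using rb rpos by (intro divide_left_mono power_mono mult_pos_pos) auto
  have b2: "1 / r\<^sup>2 \<le> 1 / (1 + (1/2) * sqrt (A / G) * S)\<^sup>2"
    using rb rpos lo by (intro divide_left_mono power_mono mult_pos_pos) auto
  show ?thesis unfolding Pe using part1 b1 b2 unfolding Pr S_def by simp
qed

end


theorem mainTheorem6: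
  fixes \<Lambda> :: "(real ^ 'm) set"
    and d h :: "real ^ 'm \<Rightarrow> real"
    and gh :: "real ^ 'm \<Rightarrow> real ^ 'm"
    and lamstar :: "real ^ 'm"
    and G A :: real
    and lam v y :: "nat \<Rightarrow> real ^ 'm"
    and Aseq eta theta :: "nat \<Rightarrow> real"
    and T :: nat
  assumes closed: "closed \<Lambda>" and convex: "convex \<Lambda>"
    and d_concave: "concave_on \<Lambda> d"
    and lamstar_in: "lamstar \<in> \<Lambda>"
    and lamstar_max: "\<forall>l\<in>\<Lambda>. d l \<le> d lamstar"
    and h_strict: "strictly_convex_on \<Lambda> h"
    and h_deriv: "\<forall>x\<in>\<Lambda>. (h has_derivative (\<lambda>u. gh x \<bullet> u)) (at x within \<Lambda>)"
    and gh_cont: "continuous_on \<Lambda> gh"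
    and G_pos: "G > 0"
    and TSP: "\<forall>l\<in>\<Lambda>. \<forall>l1\<in>\<Lambda>. \<forall>l2\<in>\<Lambda>. \<forall>t::real. 0 \<le> t \<and> t \<le> 1 \<longrightarrow>
        bregman h gh ((1 - t) *\<^sub>R l + t *\<^sub>R l1) ((1 - t) *\<^sub>R l + t *\<^sub>R l2)
          \<le> G * t\<^sup>2 * bregman h gh l1 l2"
    and lam0_in: "lam 0 \<in> \<Lambda>"
    and v0: "v 0 = lam 0"
    and A_pos: "A > 0"
    and A0: "Aseq 0 = A"
    and eta_pos: "\<forall>k. eta k > 0"
    and theta_def: "\<forall>k. theta k =
        (sqrt ((Aseq k * eta k / G)\<^sup>2 + 4 * Aseq k * eta k / G) - Aseq k * eta k / G) / 2"
    and y_def: "\<forall>k. y k = theta k *\<^sub>R v k + (1 - theta k) *\<^sub>R lam k"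
    and lam_step: "\<forall>k. lam (Suc k) \<in> \<Lambda> \<and>
        (\<forall>l\<in>\<Lambda>. d l - (1 / eta k) * bregman h gh l (y k)
           \<le> d (lam (Suc k)) - (1 / eta k) * bregman h gh (lam (Suc k)) (y k))"
    and Aseq_step: "\<forall>k. Aseq (Suc k) = (1 - theta k) * Aseq k"
    and v_step: "\<forall>k. v (Suc k) \<in> \<Lambda> \<and>
        (\<forall>l\<in>\<Lambda>. acc_phi d h gh A lam y eta theta (Suc k) l
           \<le> acc_phi d h gh A lam y eta theta (Suc k) (v (Suc k)))"
    and T_ge: "T \<ge> 1"
  shows "d lamstar - d (lam T)
           \<le> (\<Prod>k<T. 1 - theta k) * (d lamstar - d (lam 0) + A * bregman h gh lamstar (lam 0))
         \<and> 1 / (1 + sqrt (A / G) * (\<Sum>k<T. sqrt (eta k)))\<^sup>2 \<le> (\<Prod>k<T. 1 - theta k)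
         \<and> (\<Prod>k<T. 1 - theta k) \<le> 1 / (1 + (1/2) * sqrt (A / G) * (\<Sum>k<T. sqrt (eta k)))\<^sup>2"
proof -
  interpret accbpp \<Lambda> d h gh lamstar G A lam v y Aseq eta theta T
    by (rule accbpp.intro) (rule assms)+
  show ?thesis by (rule main)
qed

end
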